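(* Let $d\geq 1$ be an integer and let $\varphi(\varepsilon,\zeta)=\sum_{i,j\geq 0}a_{i,j}\varepsilon^i\zeta^j$ be a power series converging in some polydisc of $\mathbb{C}^2$ centred at $(0,0)$, with $\varphi(0,0)=a_{0,0}=0$. Let $\delta>0$, let $\tau\in\mathbb{C}\setminus\{0\}$, and let $g:\{\varepsilon\in\mathbb{C}:0<|\varepsilon|<\delta\}\to\mathbb{C}$ be a continuous function such that $g(\varepsilon)\sim \tau/\varepsilon$ as $\varepsilon\to 0$ and $|g(\varepsilon)-\tau/\varepsilon|$ is bounded. Then for every entire function $\psi:\mathbb{C}\to\mathbb{C}$, $$\lim_{\varepsilon\to 0}\psi\big(g(\varepsilon)\,\varphi(\varepsilon,\varepsilon\Omega)\big)=\psi\Big(\tau\,\frac{\partial\varphi}{\partial\varepsilon}(0,0)\,I_d+\tau\,\frac{\partial\varphi}{\partial\zeta}(0,0)\,\Omega\Big),$$ the convergence being uniform with respect to $\Omega$ in any compact subset of $\mathbb{C}^{d\times d}$.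
   Context: For $\Omega\in\mathbb{C}^{d\times d}$, $\varphi(\varepsilon,\varepsilon\Omega)$ denotes the matrix $\sum_{i,j}a_{i,j}\varepsilon^{i+j}\Omega^j$, which converges when $|\varepsilon|$ is small enough relative to $\|\Omega\|$ (for $\Omega$ in a fixed compact set this holds for all sufficiently small $|\varepsilon|$). For an entire function $\psi(\zeta)=\sum_k b_k\zeta^k$ and a matrix $X\in\mathbb{C}^{d\times d}$, $\psi(X)=\sum_k b_kX^k$. $I_d$ is the $d\times d$ identity matrix. *)

theory Defs
  imports "HOL-Analysis.Analysis" "HOL-Library.Landau_Symbols"
begin

text \<open>Square complex matrices of size d = CARD('n) are modelled as complex ^ 'n ^ 'n,
  with matrix product (**) and identity mat 1.\<close>

primrec cmat_pow :: "complex ^ 'n ^ 'n \<Rightarrow> nat \<Rightarrow> complex ^ 'n ^ 'n" where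
  "cmat_pow A 0 = mat 1"
| "cmat_pow A (Suc k) = A ** cmat_pow A k"

definition cmat_scale :: "complex \<Rightarrow> complex ^ 'n ^ 'n \<Rightarrow> complex ^ 'n ^ 'n" where
  "cmat_scale c A = (\<chi> r s. c * (A $ r $ s))"

definition phi2 :: "(nat \<Rightarrow> nat \<Rightarrow> complex) \<Rightarrow> complex \<Rightarrow> complex \<Rightarrow> complex" where
  "phi2 a e z = (\<Sum>\<^sub>\<infinity>(i,j)\<in>UNIV. a i j * e ^ i * z ^ j)"

text \<open>The matrix phi(e, e Omega) = sum a_ij e^(i+j) Omega^j.\<close>
definition phi_mat :: "(nat \<Rightarrow> nat \<Rightarrow> complex) \<Rightarrow> complex \<Rightarrow> complex ^ 'n ^ 'n \<Rightarrow> complex ^ 'n ^ 'n" where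
  "phi_mat a e \<Omega> = (\<Sum>\<^sub>\<infinity>(i,j)\<in>UNIV. cmat_scale (a i j * e ^ (i + j)) (cmat_pow \<Omega> j))"

definition psi_mat :: "(nat \<Rightarrow> complex) \<Rightarrow> complex ^ 'n ^ 'n \<Rightarrow> complex ^ 'n ^ 'n" where
  "psi_mat b X = (\<Sum>k. cmat_scale (b k) (cmat_pow X k))"

end

theory Submission
  imports Defs
begin

lemma norm_vec_le_sum: "norm (x::'a::real_normed_vector^'m) \<le> (\<Sum>i\<in>UNIV. norm (x$i))"
  by (simp add: norm_vec_def L2_set_le_sum)

lemma norm_entry_le: "norm ((A::complex^'n^'n) $ r $ s) \<le> norm A"
proof -
  have "norm (A$r$s) \<le> norm (A$r)" by (rule Finite_Cartesian_Product.norm_nth_le)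
  also have "norm (A$r) \<le> norm A" by (rule Finite_Cartesian_Product.norm_nth_le)
  finally show ?thesis .
qed

lemma norm_cvec_scale: "norm (\<chi> i. c * (x::complex^'m) $ i) = norm c * norm x"
  by (simp add: norm_vec_def norm_mult L2_set_right_distrib)

lemma norm_cmat_scale: "norm (cmat_scale c (A::complex^'n^'n)) = norm c * norm A"
proof -
  have "\<And>r. L2_set (\<lambda>s. cmod (c * A$r$s)) UNIV = cmod c * L2_set (\<lambda>s. cmod (A$r$s)) UNIV"
    by (simp add: norm_mult L2_set_right_distrib)
  then have "norm (cmat_scale c A) = L2_set (\<lambda>r. norm c * norm (A $ r)) UNIV"
    unfolding cmat_scale_def by (simp add: norm_vec_def)
  also have "\<dots> = norm c * norm A"
    by (simp add: norm_vec_def L2_set_right_distrib)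
  finally show ?thesis .
qed

lemma norm_mmult_le: "norm ((A::complex^'n^'n) ** (B::complex^'n^'n)) \<le> real CARD('n)^3 * norm A * norm B"
proof -
  let ?d = "real CARD('n)"
  have e: "norm ((A ** B) $ r $ s) \<le> ?d * (norm A * norm B)" for r s
  proof -
    have "norm ((A ** B) $ r $ s) = norm (\<Sum>t\<in>UNIV. A$r$t * B$t$s)"
      by (simp add: matrix_matrix_mult_def)
    also have "\<dots> \<le> (\<Sum>t\<in>UNIV. norm (A$r$t) * norm (B$t$s))"
      by (rule order_trans[OF norm_sum]) (simp add: norm_mult)
    also have "\<dots> \<le> (\<Sum>t\<in>(UNIV::'n set). norm A * norm B)"
      using norm_entry_le by (intro sum_mono mult_mono) auto
    finally show ?thesis by simp
  qed
  have "norm (A ** B) \<le> (\<Sum>r\<in>UNIV. norm ((A**B)$r))" by (rule norm_vec_le_sum)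
  also have "\<dots> \<le> (\<Sum>r\<in>(UNIV::'n set). \<Sum>s\<in>(UNIV::'n set). norm ((A**B)$r$s))"
    by (intro sum_mono norm_vec_le_sum)
  also have "\<dots> \<le> (\<Sum>r\<in>(UNIV::'n set). \<Sum>s\<in>(UNIV::'n set). ?d * (norm A * norm B))"
    by (intro sum_mono e)
  also have "\<dots> = ?d^3 * norm A * norm B" by (simp add: power3_eq_cube)
  finally show ?thesis .
qed

lemma norm_cmat_pow_le:
  "norm (cmat_pow (A::complex^'n^'n) j) \<le> (real CARD('n)^3 * norm A)^j * norm (mat 1 :: complex^'n^'n)"
proof (induction j)
  case 0 then show ?case by simp
next
  case (Suc j)
  have "norm (cmat_pow A (Suc j)) \<le> real CARD('n)^3 * norm A * norm (cmat_pow A j)"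
    by (simp add: norm_mmult_le)
  also have "\<dots> \<le> real CARD('n)^3 * norm A * ((real CARD('n)^3 * norm A)^j * norm (mat 1 :: complex^'n^'n))"
    by (intro mult_left_mono Suc) auto
  finally show ?case by (simp add: mult_ac)
qed

lemma cmat_pow_1: "cmat_pow A 1 = A" by (simp add: matrix_mul_rid)

lemma cont_mmult: "continuous_on S f \<Longrightarrow> continuous_on S h \<Longrightarrow>
   continuous_on S (\<lambda>x. (f x :: complex^'n^'n) ** h x)"
  unfolding matrix_matrix_mult_def
  by (intro continuous_on_vec_lambda continuous_on_sum continuous_on_mult continuous_on_component)

lemma cont_cmat_pow: "continuous_on S (\<lambda>X::complex^'n^'n. cmat_pow X k)"
proof (induction k)
  case 0 show ?case by (simp add: continuous_on_const)
next
  case (Suc k) show ?case by (simp only: cmat_pow.simps) (rule cont_mmult[OF continuous_on_id Suc])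
qed

lemma cont_cmat_scale: "continuous_on S f \<Longrightarrow> continuous_on S (\<lambda>x. cmat_scale c (f x :: complex^'n^'n))"
  unfolding cmat_scale_def
  by (intro continuous_on_vec_lambda continuous_on_mult continuous_on_const continuous_on_component)


lemma rem_bound:
  fixes G :: "nat \<times> nat \<Rightarrow> 'b::banach" and W :: "nat \<times> nat \<Rightarrow> real"
  assumes W: "W summable_on UNIV" "\<And>p. 0 \<le> W p"
    and G: "\<And>i j. norm (G (i,j)) \<le> W (i,j) * q^(i+j)"
    and q: "0 \<le> q" "q \<le> 1" and G00: "G (0,0) = 0"
  shows "G summable_on UNIV"
    and "norm (infsum G UNIV - (G (1,0) + G (0,1))) \<le> q^2 * infsum W (UNIV - {(0,0),(1,0),(0,1)})"
proof -
  define P :: "(nat\<times>nat) set" where "P = {(0,0),(1,0),(0,1)}"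
  have Gp: "norm (G p) \<le> W p * q^(fst p + snd p)" for p
    using G[of "fst p" "snd p"] by simp
  have Gp1: "norm (G p) \<le> W p" for p
  proof -
    have "W p * q^(fst p + snd p) \<le> W p * 1"
      by (intro mult_left_mono power_le_one q W(2))
    then show ?thesis using Gp[of p] by simp
  qed
  have sN: "(\<lambda>p. norm (G p)) summable_on UNIV"
    by (rule summable_on_comparison_test[OF W(1)]) (use Gp1 in auto)
  show S: "G summable_on UNIV" by (rule abs_summable_summable[OF sN])
  have SP: "G summable_on P" unfolding P_def by (rule summable_on_finite) simp
  have "infsum G (UNIV - P) = infsum G UNIV - infsum G P"
    by (rule infsum_Diff[OF S SP]) simp
  moreover have "infsum G P = G (1,0) + G (0,1)"
    unfolding P_def using G00 by simp
  ultimately have eq: "infsum G UNIV - (G (1,0) + G (0,1)) = infsum G (UNIV - P)" by simp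
  have sN': "(\<lambda>p. norm (G p)) summable_on (UNIV - P)"
    by (rule summable_on_subset_banach[OF sN]) auto
  have sW': "W summable_on (UNIV - P)"
    by (rule summable_on_subset_banach[OF W(1)]) auto
  have "norm (infsum G (UNIV - P)) \<le> infsum (\<lambda>p. norm (G p)) (UNIV - P)"
    by (rule norm_infsum_bound) (use sN' in simp)
  also have "\<dots> \<le> infsum (\<lambda>p. q^2 * W p) (UNIV - P)"
  proof (rule infsum_mono[OF sN'])
    show "(\<lambda>p. q^2 * W p) summable_on (UNIV - P)"
      by (rule summable_on_cmult_right[OF sW'])
    fix p assume p: "p \<in> UNIV - P"
    obtain i j where pij: "p = (i,j)" by (cases p)
    have "2 \<le> i + j" using p unfolding pij P_def
      by (cases i; cases j) auto
    then have "q^(i+j) \<le> q^2" by (intro power_decreasing q)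
    then have "W p * q^(i+j) \<le> W p * q^2" by (intro mult_left_mono W(2))
    then show "norm (G p) \<le> q^2 * W p" using Gp[of p] unfolding pij by (simp add: mult_ac)
  qed
  also have "\<dots> = q^2 * infsum W (UNIV - P)"
    by (rule infsum_cmult_right) (use sW' in simp)
  finally show "norm (infsum G UNIV - (G (1,0) + G (0,1))) \<le> q^2 * infsum W (UNIV - {(0,0),(1,0),(0,1)})"
    using eq unfolding P_def by simp
qed


definition Wt :: "(nat \<Rightarrow> nat \<Rightarrow> complex) \<Rightarrow> real \<Rightarrow> nat \<times> nat \<Rightarrow> real" where
  "Wt a \<rho> p = norm (a (fst p) (snd p)) * \<rho>^(fst p + snd p)"

abbreviation "PP \<equiv> {(0::nat,0::nat),(1,0),(0,1)}"

lemma phi2_bound: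
  assumes Ws: "Wt a \<rho> summable_on UNIV" and rho: "\<rho> > 0" and s: "0 \<le> s" "s \<le> \<rho>"
    and ez: "norm e \<le> s" "norm z \<le> s" and a00: "a 0 0 = 0"
  shows "norm (phi2 a e z - (a 1 0 * e + a 0 1 * z)) \<le> (s/\<rho>)^2 * infsum (Wt a \<rho>) (UNIV - PP)"
proof -
  define G where "G = (\<lambda>(i,j). a i j * e^i * z^j)"
  have Gb: "norm (G (i,j)) \<le> Wt a \<rho> (i,j) * (s/\<rho>)^(i+j)" for i j
  proof -
    have "norm (G (i,j)) = norm (a i j) * (norm e^i * norm z^j)"
      by (simp add: G_def norm_mult norm_power)
    also have "\<dots> \<le> norm (a i j) * (s^i * s^j)"
      by (intro mult_left_mono mult_mono power_mono ez) (use s in auto)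
    also have "\<dots> = Wt a \<rho> (i,j) * (s/\<rho>)^(i+j)"
      using rho by (simp add: Wt_def power_add power_divide)
    finally show ?thesis .
  qed
  have W0: "0 \<le> Wt a \<rho> p" for p using rho by (simp add: Wt_def)
  have q: "0 \<le> s/\<rho>" "s/\<rho> \<le> 1" using s rho by auto
  have "norm (infsum G UNIV - (G (1,0) + G (0,1))) \<le> (s/\<rho>)^2 * infsum (Wt a \<rho>) (UNIV - PP)"
    by (rule rem_bound(2)[OF Ws W0 Gb q]) (simp add: G_def a00)
  moreover have "infsum G UNIV = phi2 a e z" by (simp add: G_def phi2_def)
  ultimately show ?thesis by (simp add: G_def)
qed

lemma deriv_phi2:
  assumes Ws: "Wt a \<rho> summable_on UNIV" and rho: "\<rho> > 0" and a00: "a 0 0 = 0"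
  shows "deriv (\<lambda>e. phi2 a e 0) 0 = a 1 0" and "deriv (\<lambda>z. phi2 a 0 z) 0 = a 0 1"
proof -
  define T where "T = infsum (Wt a \<rho>) (UNIV - PP)"
  have p00: "phi2 a 0 0 = 0"
    using phi2_bound[OF Ws rho order_refl rho[THEN less_imp_le], of 0 0] a00 by simp
  have key: "((\<lambda>h. (F (0 + h) - F 0) / h) \<longlongrightarrow> c) (at 0)"
    if F0: "F 0 = 0" and Fb: "\<And>h. norm h \<le> \<rho> \<Longrightarrow> norm (F h - c * h) \<le> (norm h/\<rho>)^2 * T" for F :: "complex \<Rightarrow> complex" and c
  proof -
    have "((\<lambda>h. (F (0 + h) - F 0) / h - c) \<longlongrightarrow> 0) (at 0)"
    proof (rule Lim_null_comparison)
      show "((\<lambda>h. norm h * (T / \<rho>^2)) \<longlongrightarrow> 0) (at (0::complex))"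
        by (intro tendsto_eq_intros) auto
      have "\<forall>\<^sub>F h in at (0::complex). h \<noteq> 0 \<and> norm h < \<rho>"
        using rho by (auto simp: eventually_at intro!: exI[of _ \<rho>])
      then show "\<forall>\<^sub>F h in at 0. norm ((F (0 + h) - F 0) / h - c) \<le> norm h * (T / \<rho>^2)"
      proof eventually_elim
        case (elim h)
        then have "(F (0 + h) - F 0) / h - c = (F h - c * h) / h"
          by (simp add: F0 field_simps)
        also have "norm \<dots> = norm (F h - c * h) / norm h" by (simp add: norm_divide)
        also have "\<dots> \<le> (norm h/\<rho>)^2 * T / norm h"
          using elim Fb[of h] by (intro divide_right_mono) auto
        also have "\<dots> = norm h * (T / \<rho>^2)"
          using elim by (simp add: power2_eq_square field_simps)
        finally show ?case .
      qed
    qed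
    then show ?thesis by (simp add: Lim_null[symmetric])
  qed
  have "((\<lambda>e. phi2 a e 0) has_field_derivative a 1 0) (at 0)"
    unfolding DERIV_def
  proof (rule key)
    show "phi2 a 0 0 = 0" by (rule p00)
    fix h :: complex assume "norm h \<le> \<rho>"
    then show "norm (phi2 a h 0 - a 1 0 * h) \<le> (norm h/\<rho>)^2 * T"
      using phi2_bound[OF Ws rho norm_ge_zero \<open>norm h \<le> \<rho>\<close>, of h 0] a00 by (simp add: T_def)
  qed
  then show "deriv (\<lambda>e. phi2 a e 0) 0 = a 1 0" by (rule DERIV_imp_deriv)
  have "((\<lambda>z. phi2 a 0 z) has_field_derivative a 0 1) (at 0)"
    unfolding DERIV_def
  proof (rule key)
    show "phi2 a 0 0 = 0" by (rule p00)
    fix h :: complex assume "norm h \<le> \<rho>"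
    then show "norm (phi2 a 0 h - a 0 1 * h) \<le> (norm h/\<rho>)^2 * T"
      using phi2_bound[OF Ws rho norm_ge_zero \<open>norm h \<le> \<rho>\<close>, of 0 h] a00 by (simp add: T_def)
  qed
  then show "deriv (\<lambda>z. phi2 a 0 z) 0 = a 0 1" by (rule DERIV_imp_deriv)
qed


lemma cmat_scale_0: "cmat_scale 0 X = 0" by (simp add: cmat_scale_def vec_eq_iff)

lemma phi_mat_bound:
  fixes \<Omega> :: "complex^'n^'n"
  assumes Ws: "Wt a \<rho> summable_on UNIV" and rho: "\<rho> > 0" and a00: "a 0 0 = 0"
    and OR: "norm \<Omega> \<le> R" and Mc: "Mc = max 1 (real CARD('n)^3 * R)" and eM: "norm e * Mc \<le> \<rho>"
  shows "norm (phi_mat a e \<Omega> - (cmat_scale (a 1 0 * e) (mat 1) + cmat_scale (a 0 1 * e) \<Omega>))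
     \<le> (norm e * Mc/\<rho>)^2 * (norm (mat 1::complex^'n^'n) * infsum (Wt a \<rho>) (UNIV - PP))"
proof -
  define N1 where "N1 = norm (mat 1::complex^'n^'n)"
  define c3 where "c3 = real CARD('n)^3"
  define q where "q = norm e * Mc/\<rho>"
  define G where "G = (\<lambda>(i,j). cmat_scale (a i j * e^(i+j)) (cmat_pow \<Omega> j))"
  have Mc1: "1 \<le> Mc" using Mc by simp
  have c3R: "c3 * norm \<Omega> \<le> Mc" unfolding Mc c3_def
    using OR by (simp add: le_max_iff_disj mult_left_mono)
  have Gb: "norm (G (i,j)) \<le> (N1 * Wt a \<rho> (i,j)) * q^(i+j)" for i j
  proof -
    have "norm (G (i,j)) = norm (a i j) * norm e^(i+j) * norm (cmat_pow \<Omega> j)"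
      by (simp add: G_def norm_cmat_scale norm_mult norm_power)
    also have "\<dots> \<le> norm (a i j) * norm e^(i+j) * ((c3 * norm \<Omega>)^j * N1)"
      using norm_cmat_pow_le[of \<Omega> j] unfolding c3_def N1_def
      by (intro mult_left_mono) auto
    also have "\<dots> \<le> norm (a i j) * norm e^(i+j) * (Mc^(i+j) * N1)"
    proof -
      have "(c3 * norm \<Omega>)^j \<le> Mc^j" by (intro power_mono c3R) (simp add: c3_def)
      also have "\<dots> \<le> Mc^(i+j)" by (intro power_increasing Mc1) simp
      finally show ?thesis unfolding N1_def by (intro mult_left_mono mult_right_mono) auto
    qed
    also have "\<dots> = (N1 * Wt a \<rho> (i,j)) * q^(i+j)"
      using rho by (simp add: Wt_def q_def power_divide power_mult_distrib)
    finally show ?thesis .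
  qed
  have W0: "0 \<le> N1 * Wt a \<rho> p" for p using rho by (simp add: Wt_def N1_def)
  have Ws': "(\<lambda>p. N1 * Wt a \<rho> p) summable_on UNIV" by (rule summable_on_cmult_right[OF Ws])
  have q: "0 \<le> q" "q \<le> 1" using eM rho Mc1 by (auto simp: q_def)
  have "norm (infsum G UNIV - (G (1,0) + G (0,1))) \<le> q^2 * infsum (\<lambda>p. N1 * Wt a \<rho> p) (UNIV - PP)"
    by (rule rem_bound(2)[OF Ws' W0 Gb q]) (simp add: G_def a00 cmat_scale_0)
  moreover have "infsum G UNIV = phi_mat a e \<Omega>" by (simp add: G_def phi_mat_def)
  moreover have "infsum (\<lambda>p. N1 * Wt a \<rho> p) (UNIV - PP) = N1 * infsum (Wt a \<rho>) (UNIV - PP)"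
    by (rule infsum_cmult_right) (rule summable_on_subset_banach[OF Ws], auto)
  ultimately show ?thesis by (simp add: G_def q_def N1_def cmat_pow_1)
qed

lemma psi_cont:
  assumes entire: "\<forall>z. summable (\<lambda>k. b k * z ^ k)" and Rb: "0 \<le> Rb"
  shows "continuous_on (cball 0 Rb) (psi_mat b :: complex^'n^'n \<Rightarrow> _)"
proof -
  define N1 where "N1 = norm (mat 1::complex^'n^'n)"
  define c3 where "c3 = real CARD('n)^3"
  define f where "f = (\<lambda>k (X::complex^'n^'n). cmat_scale (b k) (cmat_pow X k))"
  define M where "M = (\<lambda>k. norm (b k * complex_of_real (c3*Rb) ^ k) * N1)"
  have fb: "norm (f k X) \<le> M k" if "X \<in> cball 0 Rb" for k X
  proof -
    have "norm (f k X) = norm (b k) * norm (cmat_pow X k)"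
      by (simp add: f_def norm_cmat_scale)
    also have "\<dots> \<le> norm (b k) * ((c3 * norm X)^k * N1)"
      using norm_cmat_pow_le[of X k] unfolding c3_def N1_def by (intro mult_left_mono) auto
    also have "\<dots> \<le> norm (b k) * ((c3 * Rb)^k * N1)"
      using that by (intro mult_left_mono mult_right_mono power_mono) (auto simp: c3_def N1_def)
    also have "\<dots> = M k" using Rb by (simp add: M_def norm_mult norm_power c3_def)
    finally show ?thesis .
  qed
  have nn: "0 \<le> c3*Rb" using Rb by (simp add: c3_def)
  have lt: "norm (complex_of_real (c3*Rb)) < norm (complex_of_real (c3*Rb+1))"
    using nn by (simp only: norm_of_real)
  have sM: "summable M" unfolding M_def
    by (rule summable_mult2[OF powser_insidea[OF entire[rule_format] lt]])
  have ul: "uniform_limit (cball 0 Rb) (\<lambda>n X. \<Sum>i<n. f i X) (\<lambda>X. suminf (\<lambda>i. f i X)) sequentially"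
    by (rule Weierstrass_m_test[OF fb sM])
  have "continuous_on (cball 0 Rb) (\<lambda>X. suminf (\<lambda>i. f i X))"
  proof (rule uniform_limit_theorem[OF _ ul])
    show "\<forall>\<^sub>F n in sequentially. continuous_on (cball 0 Rb) (\<lambda>X. \<Sum>i<n. f i X)"
      unfolding f_def by (intro always_eventually allI continuous_on_sum cont_cmat_scale cont_cmat_pow)
  qed simp
  then show ?thesis unfolding f_def psi_mat_def by simp
qed


theorem lemma6p2:
  fixes a :: "nat \<Rightarrow> nat \<Rightarrow> complex"
    and b :: "nat \<Rightarrow> complex"
    and g :: "complex \<Rightarrow> complex"
    and \<delta> :: real and \<tau> :: complex
    and K :: "(complex ^ 'n ^ 'n) set"
  assumes conv: "\<exists>r>0. \<forall>e z. norm e < r \<longrightarrow> norm z < r \<longrightarrow>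
                    (\<lambda>(i,j). a i j * e ^ i * z ^ j) summable_on UNIV"
    and a00: "a 0 0 = 0"
    and \<delta>pos: "\<delta> > 0"
    and \<tau>nz: "\<tau> \<noteq> 0"
    and gcont: "continuous_on {e. 0 < norm e \<and> norm e < \<delta>} g"
    and gasymp: "g \<sim>[at 0] (\<lambda>e. \<tau> / e)"
    and gbdd: "\<exists>M. \<forall>e. 0 < norm e \<and> norm e < \<delta> \<longrightarrow> norm (g e - \<tau> / e) \<le> M"
    and entire: "\<forall>z. summable (\<lambda>k. b k * z ^ k)"
    and K: "compact K"
  shows "uniform_limit K
           (\<lambda>e \<Omega>. psi_mat b (cmat_scale (g e) (phi_mat a e \<Omega>)))
           (\<lambda>\<Omega>. psi_mat b (cmat_scale (\<tau> * deriv (\<lambda>e. phi2 a e 0) 0) (mat 1)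
                          + cmat_scale (\<tau> * deriv (\<lambda>z. phi2 a 0 z) 0) \<Omega>))
           (at 0)"
proof -
  obtain r where r: "r > 0" and convr: "\<And>e z. norm e < r \<Longrightarrow> norm z < r \<Longrightarrow>
                    (\<lambda>(i,j). a i j * e ^ i * z ^ j) summable_on UNIV"
    using conv by blast
  define \<rho> where "\<rho> = r/2"
  have rho: "\<rho> > 0" using r by (simp add: \<rho>_def)
  have Ws: "Wt a \<rho> summable_on UNIV"
  proof -
    have nr: "norm (complex_of_real \<rho>) < r" using r rho by (simp add: \<rho>_def)
    have "(\<lambda>(i,j). a i j * complex_of_real \<rho> ^ i * complex_of_real \<rho> ^ j) summable_on UNIV"
      by (rule convr[OF nr nr])
    then have "(\<lambda>p. norm ((\<lambda>(i,j). a i j * complex_of_real \<rho> ^ i * complex_of_real \<rho> ^ j) p)) summable_on UNIV"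
      using summable_on_iff_abs_summable_on_complex by blast
    moreover have "(\<lambda>p. norm ((\<lambda>(i,j). a i j * complex_of_real \<rho> ^ i * complex_of_real \<rho> ^ j) p)) = Wt a \<rho>"
      using rho by (auto simp: fun_eq_iff Wt_def norm_mult norm_power power_add)
    ultimately show ?thesis by simp
  qed
  have d1: "deriv (\<lambda>e. phi2 a e 0) 0 = a 1 0" and d2: "deriv (\<lambda>z. phi2 a 0 z) 0 = a 0 1"
    using deriv_phi2[OF Ws rho a00] by auto
  obtain R where R: "R > 0" "\<And>\<Omega>. \<Omega> \<in> K \<Longrightarrow> norm \<Omega> \<le> R"
    using compact_imp_bounded[OF K] bounded_pos by metis
  obtain M0 where M0: "\<And>e. 0 < norm e \<Longrightarrow> norm e < \<delta> \<Longrightarrow> norm (g e - \<tau> / e) \<le> M0"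
    using gbdd by blast
  define M where "M = max M0 0"
  have M: "0 \<le> M" "\<And>e. 0 < norm e \<Longrightarrow> norm e < \<delta> \<Longrightarrow> norm (g e - \<tau> / e) \<le> M"
    using M0 by (auto simp: M_def intro: le_max_iff_disj[THEN iffD2])
  define Mc where "Mc = max 1 (real CARD('n)^3 * R)"
  have Mc1: "1 \<le> Mc" by (simp add: Mc_def)
  define N1 where "N1 = norm (mat 1::complex^'n^'n)"
  define T where "T = infsum (Wt a \<rho>) (UNIV - PP)"
  have T0: "0 \<le> T" unfolding T_def using rho by (intro infsum_nonneg) (simp add: Wt_def)
  define L where "L = (\<lambda>\<Omega>::complex^'n^'n. cmat_scale (\<tau> * a 1 0) (mat 1) + cmat_scale (\<tau> * a 0 1) \<Omega>)"
  define inner where "inner = (\<lambda>e (\<Omega>::complex^'n^'n). cmat_scale (g e) (phi_mat a e \<Omega>))"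
  define K0 where "K0 = Mc^2 * (N1 * T) / \<rho>^2"
  have K00: "0 \<le> K0" using T0 by (simp add: K0_def N1_def)
  define C1 where "C1 = M * (norm (a 1 0) * N1 + norm (a 0 1) * R) + (norm \<tau> + M) * K0"
  have C10: "0 \<le> C1" using M K00 R by (simp add: C1_def N1_def)
  have main: "norm (inner e \<Omega> - L \<Omega>) \<le> norm e * C1"
    if e: "0 < norm e" "norm e < \<delta>" "norm e \<le> 1" "norm e * Mc \<le> \<rho>" and \<Omega>: "\<Omega> \<in> K" for e \<Omega>
  proof -
    define x where "x = norm e"
    define Rm where "Rm = phi_mat a e \<Omega> - (cmat_scale (a 1 0 * e) (mat 1) + cmat_scale (a 0 1 * e) \<Omega>)"
    have "norm Rm \<le> (norm e * Mc/\<rho>)^2 * (N1 * T)"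
      unfolding Rm_def N1_def T_def
      by (rule phi_mat_bound[OF Ws rho a00 R(2)[OF \<Omega>] Mc_def e(4)])
    also have "\<dots> = x^2 * K0" using rho by (simp add: K0_def x_def power_divide power_mult_distrib)
    finally have Rmb: "norm Rm \<le> x^2 * K0" .
    have id: "inner e \<Omega> - L \<Omega> = cmat_scale ((g e * e - \<tau>) * a 1 0) (mat 1)
        + cmat_scale ((g e * e - \<tau>) * a 0 1) \<Omega> + cmat_scale (g e) Rm"
      by (simp add: inner_def L_def Rm_def cmat_scale_def vec_eq_iff algebra_simps)
    have e0: "e \<noteq> 0" using e by auto
    have "g e * e - \<tau> = e * (g e - \<tau> / e)" using e0 by (simp add: field_simps)
    then have ge: "norm (g e * e - \<tau>) \<le> x * M"
      using M(2)[OF e(1,2)] by (simp add: x_def norm_mult mult_left_mono)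
    have "norm (g e) \<le> norm (g e - \<tau> / e) + norm (\<tau> / e)"
      by (metis diff_add_cancel norm_triangle_ineq)
    then have gn: "norm (g e) \<le> norm \<tau> / x + M"
      using M(2)[OF e(1,2)] by (simp add: x_def norm_divide)
    have "norm (inner e \<Omega> - L \<Omega>) \<le> norm (cmat_scale ((g e * e - \<tau>) * a 1 0) (mat 1::complex^'n^'n))
        + norm (cmat_scale ((g e * e - \<tau>) * a 0 1) \<Omega>) + norm (cmat_scale (g e) Rm)"
      unfolding id by (meson add_mono norm_triangle_ineq order_trans order_refl)
    also have "\<dots> = norm (g e * e - \<tau>) * (norm (a 1 0) * N1) + norm (g e * e - \<tau>) * (norm (a 0 1) * norm \<Omega>)
        + norm (g e) * norm Rm"
      by (simp add: norm_cmat_scale norm_mult N1_def mult_ac)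
    also have "\<dots> \<le> (x * M) * (norm (a 1 0) * N1) + (x * M) * (norm (a 0 1) * R) + (norm \<tau> / x + M) * (x^2 * K0)"
    proof (intro add_mono mult_right_mono mult_mono ge gn Rmb)
      show "norm \<Omega> \<le> R" by (rule R(2)[OF \<Omega>])
      show "0 \<le> x * M" using M by (simp add: x_def)
      show "0 \<le> norm \<tau> / x + M" using M by (simp add: x_def)
    qed (auto simp: N1_def)
    also have "(norm \<tau> / x + M) * (x^2 * K0) = x * (norm \<tau> * K0) + x * (M * x * K0)"
      using e(1) by (simp add: x_def power2_eq_square field_simps)
    also have "M * x * K0 \<le> M * K0"
      using e(3) M K00 by (simp add: x_def mult_right_le_one_le mult.commute mult_left_mono mult_right_mono)
    then have "x * (M * x * K0) \<le> x * (M * K0)" by (intro mult_left_mono) (simp_all add: x_def)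
    then have "(x * M) * (norm (a 1 0) * N1) + (x * M) * (norm (a 0 1) * R) + (x * (norm \<tau> * K0) + x * (M * x * K0))
       \<le> x * C1" by (simp add: C1_def algebra_simps)
    finally show ?thesis by (simp add: x_def)
  qed
  have UL1: "uniform_limit K inner L (at 0)"
    unfolding uniform_limit_at_le_iff
  proof (intro allI impI)
    fix \<epsilon> :: real assume \<epsilon>: "\<epsilon> > 0"
    define d where "d = min (min \<delta> 1) (min (\<rho>/Mc) (\<epsilon>/(C1+1)))"
    have d: "d > 0" using \<epsilon> \<delta>pos rho Mc1 C10 by (simp add: d_def)
    show "\<exists>d>0. \<forall>z. 0 < dist z 0 \<and> dist z 0 < d \<longrightarrow> (\<forall>\<Omega>\<in>K. dist (inner z \<Omega>) (L \<Omega>) \<le> \<epsilon>)"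
    proof (intro exI[of _ d] conjI allI impI ballI d)
      fix z :: complex and \<Omega> assume z: "0 < dist z 0 \<and> dist z 0 < d" and \<Omega>: "\<Omega> \<in> K"
      have z1: "0 < norm z" "norm z < \<delta>" "norm z \<le> 1" using z by (auto simp: d_def)
      have "norm z < \<rho>/Mc" using z by (auto simp: d_def)
      then have z2: "norm z * Mc \<le> \<rho>" using Mc1 by (simp add: field_simps)
      have "norm z < \<epsilon>/(C1+1)" using z by (auto simp: d_def)
      then have "norm z * (C1+1) < \<epsilon>" using C10 by (simp add: field_simps)
      then have "norm z * C1 + norm z < \<epsilon>" by (simp add: distrib_left)
      then have "norm z * C1 \<le> \<epsilon>" using norm_ge_zero[of z] by linarith
      then show "dist (inner z \<Omega>) (L \<Omega>) \<le> \<epsilon>"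
        using main[OF z1 z2 \<Omega>] by (simp add: dist_norm)
    qed
  qed
  define RL where "RL = norm (\<tau> * a 1 0) * N1 + norm (\<tau> * a 0 1) * R"
  have RL0: "0 \<le> RL" using R by (simp add: RL_def N1_def)
  have Lb: "norm (L \<Omega>) \<le> RL" if "\<Omega> \<in> K" for \<Omega>
  proof -
    have "norm (L \<Omega>) \<le> norm (\<tau> * a 1 0) * N1 + norm (\<tau> * a 0 1) * norm \<Omega>"
      unfolding L_def N1_def by (metis norm_triangle_ineq norm_cmat_scale)
    also have "\<dots> \<le> RL" unfolding RL_def using R(2)[OF that]
      by (intro add_left_mono mult_left_mono) auto
    finally show ?thesis .
  qed
  have ev: "\<forall>\<^sub>F e in at 0. \<forall>\<Omega>\<in>K. inner e \<Omega> \<in> cball 0 (RL+1)"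
  proof -
    have "\<forall>\<^sub>F e in at 0. \<forall>\<Omega>\<in>K. dist (inner e \<Omega>) (L \<Omega>) < 1"
      using uniform_limitD[OF UL1, of 1] by simp
    then show ?thesis
    proof eventually_elim
      case (elim e)
      show ?case
      proof
        fix \<Omega> assume \<Omega>: "\<Omega> \<in> K"
        have "norm (inner e \<Omega>) \<le> norm (L \<Omega>) + dist (inner e \<Omega>) (L \<Omega>)"
          by (metis dist_norm norm_triangle_sub add.commute)
        then show "inner e \<Omega> \<in> cball 0 (RL+1)"
          using elim \<Omega> Lb[OF \<Omega>] by fastforce
      qed
    qed
  qed
  have uc: "uniformly_continuous_on (cball 0 (RL+1)) (psi_mat b :: complex^'n^'n \<Rightarrow> _)"
    using RL0 by (intro compact_uniformly_continuous psi_cont[OF entire] compact_cball) simp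
  have res: "uniform_limit K (\<lambda>e \<Omega>. psi_mat b (inner e \<Omega>)) (\<lambda>\<Omega>. psi_mat b (L \<Omega>)) (at 0)"
    by (rule uniform_limit_compose_uniformly_continuous_on[OF UL1 uc ev closed_cball])
  then show ?thesis unfolding d1 d2 L_def inner_def by simp
qed

end
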